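(* For every $*$-term $P$, there exist $X\in\mathcal T_{A,\triangle}$ and $Y\in\mathcal T_A$ such that $se(P)=X[\triangle\mapsto Y]$, $X$ contains a leaf $\triangle$ (possibly $X=\triangle$), and $Y=se(R)$ where $R$ is the rightmost $\ell$-term in $P$.
   Context: Let $A$ be a nonempty set of atoms; terms are closed terms over constants $\mathsf T,\mathsf F$, atoms $a\in A$, unary $\neg$, binary $\land^\circ$, $\lor^\circ$. Evaluation trees $\mathcal T_A$: $\mathsf T,\mathsf F\in\mathcal T_A$ and $(X\unlhd a\unrhd Y)\in\mathcal T_A$ for $X,Y\in\mathcal T_A$, $a\in A$. $\mathcal T_{A,\triangle}$ is defined in the same way but with leaves in $\{\mathsf T,\mathsf F,\triangle\}$ (so $\mathcal T_A\subseteq\mathcal T_{A,\triangle}$). Leaf replacement $X[\ell_1\mapsto Y_1,\ldots]$ replaces every leaf labelled $\ell_i$ by $Y_i$ (recursively: a leaf $\ell_i$ becomes $Y_i$, other leaves unchanged, and $(X_1\unlhd a\unrhd X_2)[\ldots]=X_1[\ldots]\unlhd a\unrhd X_2[\ldots]$). $se$: $se(\mathsf T)=\mathsf T$, $se(\mathsf F)=\mathsf F$, $se(a)=\mathsf T\unlhd a\unrhd\mathsf F$, $se(\neg P)=se(P)[\mathsf T\mapsto\mathsf F,\mathsf F\mapsto\mathsf T]$, $se(P\land^\circ Q)=se(P)[\mathsf T\mapsto se(Q)]$, $se(P\lor^\circ Q)=se(P)[\mathsf F\mapsto se(Q)]$. Syntactic categories ($a\in A$): $\mathsf T$-terms $P^{\mathsf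 T}::=\mathsf T\mid(a\land^\circ P^{\mathsf T})\lor^\circ P^{\mathsf T}$; $\mathsf F$-terms $P^{\mathsf F}::=\mathsf F\mid(a\lor^\circ P^{\mathsf F})\land^\circ P^{\mathsf F}$; $\ell$-terms $P^\ell::=(a\land^\circ P^{\mathsf T})\lor^\circ P^{\mathsf F}\mid(\neg a\land^\circ P^{\mathsf T})\lor^\circ P^{\mathsf F}$; $*$-terms $P^*::=P^c\mid P^d$, $P^c::=P^\ell\mid P^*\land^\circ P^d$, $P^d::=P^\ell\mid P^*\lor^\circ P^c$. A $*$-term is thus built from $\ell$-terms by $\land^\circ$ and $\lor^\circ$; its rightmost $\ell$-term is the last of these $\ell$-terms read from left to right. *)

theory Defs
  imports Main
begin

datatype 'a trm = TT | FF | Atom 'a | Neg "'a trm" | LAnd "'a trm" "'a trm" | LOr "'a trm" "'a trm"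

text \<open>Evaluation trees with leaves T, F and triangle; T_A consists of the triangle-free ones.\<close>
datatype 'a etree = LT | LF | LTri | Node "'a etree" 'a "'a etree"

fun no_tri :: "'a etree \<Rightarrow> bool" where
  "no_tri LTri = False"
| "no_tri (Node X a Y) = (no_tri X \<and> no_tri Y)"
| "no_tri _ = True"

fun has_tri :: "'a etree \<Rightarrow> bool" where
  "has_tri LTri = True"
| "has_tri (Node X a Y) = (has_tri X \<or> has_tri Y)"
| "has_tri _ = False"

text \<open>Simultaneous leaf replacement X[T |-> t, F |-> f, triangle |-> d].\<close>
fun repl :: "'a etree \<Rightarrow> 'a etree \<Rightarrow> 'a etree \<Rightarrow> 'a etree \<Rightarrow> 'a etree" where
  "repl t f d LT = t"
| "repl t f d LF = f"
| "repl t f d LTri = d"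
| "repl t f d (Node X a Y) = Node (repl t f d X) a (repl t f d Y)"

fun se :: "'a trm \<Rightarrow> 'a etree" where
  "se TT = LT"
| "se FF = LF"
| "se (Atom a) = Node LT a LF"
| "se (Neg P) = repl LF LT LTri (se P)"
| "se (LAnd P Q) = repl (se Q) LF LTri (se P)"
| "se (LOr P Q) = repl LT (se Q) LTri (se P)"

inductive is_T :: "'a trm \<Rightarrow> bool" where
  T_T: "is_T TT"
| T_step: "is_T P \<Longrightarrow> is_T Q \<Longrightarrow> is_T (LOr (LAnd (Atom a) P) Q)"

inductive is_F :: "'a trm \<Rightarrow> bool" where
  F_F: "is_F FF"
| F_step: "is_F P \<Longrightarrow> is_F Q \<Longrightarrow> is_F (LAnd (LOr (Atom a) P) Q)"

inductive is_l :: "'a trm \<Rightarrow> bool" where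
  l_pos: "is_T P \<Longrightarrow> is_F Q \<Longrightarrow> is_l (LOr (LAnd (Atom a) P) Q)"
| l_neg: "is_T P \<Longrightarrow> is_F Q \<Longrightarrow> is_l (LOr (LAnd (Neg (Atom a)) P) Q)"

inductive is_star :: "'a trm \<Rightarrow> bool" and is_c :: "'a trm \<Rightarrow> bool" and is_d :: "'a trm \<Rightarrow> bool" where
  star_c: "is_c P \<Longrightarrow> is_star P"
| star_d: "is_d P \<Longrightarrow> is_star P"
| c_l: "is_l P \<Longrightarrow> is_c P"
| c_and: "is_star P \<Longrightarrow> is_d Q \<Longrightarrow> is_c (LAnd P Q)"
| d_l: "is_l P \<Longrightarrow> is_d P"
| d_or: "is_star P \<Longrightarrow> is_c Q \<Longrightarrow> is_d (LOr P Q)"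

function rightmost :: "'a trm \<Rightarrow> 'a trm" where
  "rightmost P = (if is_l P then P else
     (case P of LAnd _ Q \<Rightarrow> rightmost Q | LOr _ Q \<Rightarrow> rightmost Q | _ \<Rightarrow> P))"
  by auto
termination
  by (relation "measure size") (auto split: trm.splits if_splits)

end

theory Submission
  imports Defs
begin

fun leaves :: "'a etree \<Rightarrow> 'a etree set" where
  "leaves (Node X a Y) = leaves X \<union> leaves Y"
| "leaves L = {L}"

lemma leaves_repl: "leaves (repl t f d X) =
  (if LT \<in> leaves X then leaves t else {}) \<union> (if LF \<in> leaves X then leaves f else {})
  \<union> (if LTri \<in> leaves X then leaves d else {})"
  by (induction X) auto

lemma has_tri_leaves: "has_tri X = (LTri \<in> leaves X)"
  by (induction X) auto

lemma no_tri_leaves: "no_tri X = (LTri \<notin> leaves X)"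
  by (induction X) auto

lemma se_notri: "LTri \<notin> leaves (se P)"
  by (induction P) (auto simp: leaves_repl)

lemma repl_repl: "repl a b c (repl t f d X) = repl (repl a b c t) (repl a b c f) (repl a b c d) X"
  by (induction X) auto

lemma repl_id_notri: "LTri \<notin> leaves X \<Longrightarrow> repl LT LF d X = X"
  by (induction X) auto

lemma T_leaf: "is_T P \<Longrightarrow> LT \<in> leaves (se P)"
  by (induction rule: is_T.induct) (auto simp: leaves_repl)

lemma F_leaf: "is_F P \<Longrightarrow> LF \<in> leaves (se P)"
  by (induction rule: is_F.induct) (auto simp: leaves_repl)

lemma l_leaf: "is_l P \<Longrightarrow> LT \<in> leaves (se P) \<and> LF \<in> leaves (se P)"
  by (induction rule: is_l.induct) (auto simp: leaves_repl dest: T_leaf F_leaf)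

lemma star_leaf:
  "(is_star P \<longrightarrow> LT \<in> leaves (se P) \<and> LF \<in> leaves (se P))
 \<and> (is_c P \<longrightarrow> LT \<in> leaves (se P) \<and> LF \<in> leaves (se P))
 \<and> (is_d P \<longrightarrow> LT \<in> leaves (se P) \<and> LF \<in> leaves (se P))"
proof -
  have "(is_star P \<longrightarrow> LT \<in> leaves (se P) \<and> LF \<in> leaves (se P))
 \<and> (is_c Q \<longrightarrow> LT \<in> leaves (se Q) \<and> LF \<in> leaves (se Q))
 \<and> (is_d R \<longrightarrow> LT \<in> leaves (se R) \<and> LF \<in> leaves (se R))" for P Q R :: "'a trm"
    by (induction rule: is_star_is_c_is_d.induct[of _ _ _ P Q R]) (auto simp: leaves_repl dest: l_leaf)
  thus ?thesis by blast
qed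

lemma F_not_cd: "is_F P \<Longrightarrow> \<not> is_c P \<and> \<not> is_d P"
  by (induction rule: is_F.induct)
     (auto elim: is_c.cases is_d.cases is_l.cases)

lemma l_rightmost: "is_l P \<Longrightarrow> rightmost P = P"
  by simp

lemma main:
  fixes P Q R :: "'a trm"
  shows
  "(is_star P \<longrightarrow> (\<exists>X. se P = repl LT LF (se (rightmost P)) X \<and> LTri \<in> leaves X))
 \<and> (is_c Q \<longrightarrow> (\<exists>X. se Q = repl LT LF (se (rightmost Q)) X \<and> LTri \<in> leaves X))
 \<and> (is_d R \<longrightarrow> (\<exists>X. se R = repl LT LF (se (rightmost R)) X \<and> LTri \<in> leaves X))"
proof (induction rule: is_star_is_c_is_d.induct[of _ _ _ P Q R])
  case (c_l P)
  then show ?case by (intro exI[of _ LTri]) simp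
next
  case (d_l P)
  then show ?case by (intro exI[of _ LTri]) simp
next
  case (c_and P Q)
  have nl: "\<not> is_l (LAnd P Q)" by (auto elim: is_l.cases)
  from c_and obtain X where X: "se Q = repl LT LF (se (rightmost Q)) X" "LTri \<in> leaves X" by blast
  have lt: "LT \<in> leaves (se P)" using star_leaf c_and by blast
  let ?X = "repl X LF LTri (se P)"
  have "repl LT LF (se (rightmost Q)) ?X = repl (se Q) LF (se (rightmost Q)) (se P)"
    by (simp add: repl_repl X(1))
  also have "\<dots> = repl (se Q) LF LTri (se P)"
  proof -
    have "\<And>d. LTri \<notin> leaves Y \<Longrightarrow> repl a b d Y = repl a b LTri Y" for a b and Y :: "'a etree"
      by (induction Y) auto
    thus ?thesis using se_notri by blast
  qed
  finally show ?case using nl X(2) lt by (intro impI exI[of _ ?X]) (auto simp: leaves_repl)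
next
  case (d_or P Q)
  have nl: "\<not> is_l (LOr P Q)"
  proof
    assume "is_l (LOr P Q)"
    then show False using \<open>is_c Q\<close>
      by (cases rule: is_l.cases) (auto dest: F_not_cd)
  qed
  from d_or obtain X where X: "se Q = repl LT LF (se (rightmost Q)) X" "LTri \<in> leaves X" by blast
  have lf: "LF \<in> leaves (se P)" using star_leaf d_or by blast
  let ?X = "repl LT X LTri (se P)"
  have "repl LT LF (se (rightmost Q)) ?X = repl LT (se Q) (se (rightmost Q)) (se P)"
    by (simp add: repl_repl X(1))
  also have "\<dots> = repl LT (se Q) LTri (se P)"
  proof -
    have "\<And>d. LTri \<notin> leaves Y \<Longrightarrow> repl a b d Y = repl a b LTri Y" for a b and Y :: "'a etree"
      by (induction Y) auto
    thus ?thesis using se_notri by blast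
  qed
  finally show ?case using nl X(2) lf by (intro impI exI[of _ ?X]) (auto simp: leaves_repl)
qed auto

theorem lemma3p2:
  fixes P :: "'a trm"
  assumes "is_star P"
  shows "\<exists>X Y. se P = repl LT LF Y X \<and> has_tri X \<and> no_tri Y \<and> Y = se (rightmost P)"
  using main[of P P P] assms se_notri[of "rightmost P"]
  by (auto simp: has_tri_leaves no_tri_leaves)

end
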